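(* Assume that the hairpin completion $\mathcal{H}_k(L_1,L_2)$ is regular and that every state of the NFA $\mathcal{A}$ is reachable from an initial state and can reach a final state. Let $\kappa$ be a non-trivial strongly connected component of $\mathcal{A}$ with $N_\kappa$ states, let $A\in\kappa$ and let $A\xrightarrow{v_A}A$ be a path in $\kappa$ with $1\le|v_A|\le N_\kappa$, and let $A\xrightarrow{w}F$ be a path in $\mathcal{A}$ from $A$ to a final state $F$. Then $w$ is a prefix of some word in $v_A^+$. In addition, the word $v_A$ is uniquely determined by the conditions $A\xrightarrow{v_A}A$ and $1\le|v_A|\le N_\kappa$; the loop $A\xrightarrow{v_A}A$ visits every other state $B\in\kappa$ exactly once, so it forms a Hamiltonian cycle of $\kappa$, and $|v_A|=N_\kappa$.
   Context: $\Sigma$ is a finite alphabet with involution $a\mapsto\overline a$ (bijection, $\overline{\overline a}=a$), extended to words by $\overline{a_1\cdots a_m}=\overline{a_m}\cdots\overline{a_1}$ and to languages elementwise. $k\ge1$ is a fixed integer, $[k]=\{0,\dots,k\}$. $\mathcal{H}_k(L_1,L_2)=\{\gamma\alpha\beta\overline\alpha\overline\gamma: (\gamma\alpha\beta\overline\alpha\in L_1\text{ or }\alpha\beta\overline\alpha\overline\gamma\in L_2),\ |\alpha|=k\}$. $\mathcal{A}_1$ is a complete DFA accepting $L_1$ (states $\mathcal{Q}_1$, initial $q_{01}$, final $\mathcal{F}_1$); $\mathcal{A}_2$ a complete DFA accepting $\overline{L_2}$ (states $\mathcal{Q}_2$, initial $q_{02}$, final $\mathcal{F}_2$); $p\cdot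 w$ is the state reached from $p$ reading $w$. $\mathcal{Q}=\{(q_{01}\cdot w,q_{02}\cdot w): w\in\Sigma^*\}$, $P\cdot a=(p_1\cdot a,p_2\cdot a)$. A quadruple $(p_1,p_2,q_1,q_2)$ is a bridge if $\{\beta: p_1\cdot\beta=q_1,\ p_2\cdot\overline\beta=q_2\}\neq\emptyset$. The NFA $\mathcal{A}$ has states $((p_1,p_2),q_1,q_2,\ell)$ with $(p_1,p_2)\in\mathcal{Q}$, $\ell\in[k]$, $(p_1,p_2,q_1,q_2)$ a bridge; $a$-transitions (present when both endpoints are states): $(P,q_1\cdot\overline a,q_2\cdot\overline a,0)\xrightarrow{a}(P\cdot a,q_1,q_2,0)$ if $q_1\cdot\overline a\notin\mathcal{F}_1$ and $q_2\cdot\overline a\notin\mathcal{F}_2$; $(P,q_1\cdot\overline a,q_2\cdot\overline a,0)\xrightarrow{a}(P\cdot a,q_1,q_2,1)$ if $q_1\cdot\overline a\in\mathcal{F}_1$ or $q_2\cdot\overline a\in\mathcal{F}_2$; $(P,q_1\cdot\overline a,q_2\cdot\overline a,\ell)\xrightarrow{a}(P\cdot a,q_1,q_2,\ell+1)$ for $1\le\ell<k$. Initial states: $((q_{01},q_{02}),q_1',q_2',0)$; final states: all states at level $k$. A strongly connected component of $\mathcal{A}$ (as a directed graph) is non-trivial if it contains a path of length $\ge1$ from a state to itself. *)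

theory Defs
  imports Main "HOL-Library.Sublist"
begin

definition dstar :: "('q \<Rightarrow> 'a \<Rightarrow> 'q) \<Rightarrow> 'q \<Rightarrow> 'a list \<Rightarrow> 'q" where
  "dstar d p w = foldl d p w"

definition dlang :: "('q \<Rightarrow> 'a \<Rightarrow> 'q) \<Rightarrow> 'q \<Rightarrow> 'q set \<Rightarrow> 'a list set" where
  "dlang d q0 F = {w. dstar d q0 w \<in> F}"

definition wbar :: "('a \<Rightarrow> 'a) \<Rightarrow> 'a list \<Rightarrow> 'a list" where
  "wbar iv w = rev (map iv w)"

definition regular :: "'a list set \<Rightarrow> bool" where
  "regular L \<longleftrightarrow> (\<exists>(d :: nat \<Rightarrow> 'a \<Rightarrow> nat) q0 F Q.
      finite Q \<and> q0 \<in> Q \<and> (\<forall>q\<in>Q. \<forall>a. d q a \<in> Q) \<and> L = dlang d q0 F)"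

definition hairpin :: "('a \<Rightarrow> 'a) \<Rightarrow> nat \<Rightarrow> 'a list set \<Rightarrow> 'a list set \<Rightarrow> 'a list set" where
  "hairpin iv k L1 L2 = {\<gamma> @ \<alpha> @ \<beta> @ wbar iv \<alpha> @ wbar iv \<gamma> | \<gamma> \<alpha> \<beta>.
      length \<alpha> = k \<and> (\<gamma> @ \<alpha> @ \<beta> @ wbar iv \<alpha> \<in> L1 \<or> \<alpha> @ \<beta> @ wbar iv \<alpha> @ wbar iv \<gamma> \<in> L2)}"

definition qpairs :: "('q1 \<Rightarrow> 'a \<Rightarrow> 'q1) \<Rightarrow> 'q1 \<Rightarrow> ('q2 \<Rightarrow> 'a \<Rightarrow> 'q2) \<Rightarrow> 'q2 \<Rightarrow> ('q1 \<times> 'q2) set" where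
  "qpairs d1 q01 d2 q02 = {(dstar d1 q01 w, dstar d2 q02 w) | w. True}"

definition bridge :: "('a \<Rightarrow> 'a) \<Rightarrow> ('q1 \<Rightarrow> 'a \<Rightarrow> 'q1) \<Rightarrow> ('q2 \<Rightarrow> 'a \<Rightarrow> 'q2)
    \<Rightarrow> 'q1 \<Rightarrow> 'q2 \<Rightarrow> 'q1 \<Rightarrow> 'q2 \<Rightarrow> bool" where
  "bridge iv d1 d2 p1 p2 q1 q2 \<longleftrightarrow>
     (\<exists>\<beta>. dstar d1 p1 \<beta> = q1 \<and> dstar d2 p2 (wbar iv \<beta>) = q2)"

definition nstate :: "('a \<Rightarrow> 'a) \<Rightarrow> nat \<Rightarrow> ('q1 \<Rightarrow> 'a \<Rightarrow> 'q1) \<Rightarrow> 'q1 \<Rightarrow> ('q2 \<Rightarrow> 'a \<Rightarrow> 'q2) \<Rightarrow> 'q2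
    \<Rightarrow> ('q1 \<times> 'q2) \<times> 'q1 \<times> 'q2 \<times> nat \<Rightarrow> bool" where
  "nstate iv k d1 q01 d2 q02 S \<longleftrightarrow>
     (case S of (P, q1, q2, l) \<Rightarrow>
        P \<in> qpairs d1 q01 d2 q02 \<and> l \<le> k \<and> bridge iv d1 d2 (fst P) (snd P) q1 q2)"

definition ntrans :: "('a \<Rightarrow> 'a) \<Rightarrow> nat \<Rightarrow> ('q1 \<Rightarrow> 'a \<Rightarrow> 'q1) \<Rightarrow> 'q1 \<Rightarrow> 'q1 set
    \<Rightarrow> ('q2 \<Rightarrow> 'a \<Rightarrow> 'q2) \<Rightarrow> 'q2 \<Rightarrow> 'q2 set
    \<Rightarrow> ('q1 \<times> 'q2) \<times> 'q1 \<times> 'q2 \<times> nat \<Rightarrow> 'a \<Rightarrow> ('q1 \<times> 'q2) \<times> 'q1 \<times> 'q2 \<times> nat \<Rightarrow> bool" where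
  "ntrans iv k d1 q01 F1 d2 q02 F2 S a T \<longleftrightarrow>
     nstate iv k d1 q01 d2 q02 S \<and> nstate iv k d1 q01 d2 q02 T \<and>
     (case S of ((p1, p2), r1, r2, l) \<Rightarrow> case T of (P', q1, q2, l') \<Rightarrow>
        P' = (d1 p1 a, d2 p2 a) \<and> r1 = d1 q1 (iv a) \<and> r2 = d2 q2 (iv a) \<and>
        ((l = 0 \<and> l' = 0 \<and> r1 \<notin> F1 \<and> r2 \<notin> F2) \<or>
         (l = 0 \<and> l' = 1 \<and> (r1 \<in> F1 \<or> r2 \<in> F2)) \<or>
         (1 \<le> l \<and> l < k \<and> l' = l + 1)))"

definition ninit :: "('a \<Rightarrow> 'a) \<Rightarrow> nat \<Rightarrow> ('q1 \<Rightarrow> 'a \<Rightarrow> 'q1) \<Rightarrow> 'q1 \<Rightarrow> ('q2 \<Rightarrow> 'a \<Rightarrow> 'q2) \<Rightarrow> 'q2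
    \<Rightarrow> ('q1 \<times> 'q2) \<times> 'q1 \<times> 'q2 \<times> nat \<Rightarrow> bool" where
  "ninit iv k d1 q01 d2 q02 S \<longleftrightarrow> nstate iv k d1 q01 d2 q02 S \<and>
     (case S of (P, q1, q2, l) \<Rightarrow> P = (q01, q02) \<and> l = 0)"

definition nfinal :: "('a \<Rightarrow> 'a) \<Rightarrow> nat \<Rightarrow> ('q1 \<Rightarrow> 'a \<Rightarrow> 'q1) \<Rightarrow> 'q1 \<Rightarrow> ('q2 \<Rightarrow> 'a \<Rightarrow> 'q2) \<Rightarrow> 'q2
    \<Rightarrow> ('q1 \<times> 'q2) \<times> 'q1 \<times> 'q2 \<times> nat \<Rightarrow> bool" where
  "nfinal iv k d1 q01 d2 q02 S \<longleftrightarrow> nstate iv k d1 q01 d2 q02 S \<and>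
     (case S of (P, q1, q2, l) \<Rightarrow> l = k)"

definition nrun :: "('a \<Rightarrow> 'a) \<Rightarrow> nat \<Rightarrow> ('q1 \<Rightarrow> 'a \<Rightarrow> 'q1) \<Rightarrow> 'q1 \<Rightarrow> 'q1 set
    \<Rightarrow> ('q2 \<Rightarrow> 'a \<Rightarrow> 'q2) \<Rightarrow> 'q2 \<Rightarrow> 'q2 set
    \<Rightarrow> ('q1 \<times> 'q2) \<times> 'q1 \<times> 'q2 \<times> nat \<Rightarrow> 'a list
    \<Rightarrow> (('q1 \<times> 'q2) \<times> 'q1 \<times> 'q2 \<times> nat) list \<Rightarrow> ('q1 \<times> 'q2) \<times> 'q1 \<times> 'q2 \<times> nat \<Rightarrow> bool" where
  "nrun iv k d1 q01 F1 d2 q02 F2 S w ss T \<longleftrightarrow>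
     length ss = length w + 1 \<and> ss ! 0 = S \<and> ss ! length w = T \<and>
     (\<forall>i < length w. ntrans iv k d1 q01 F1 d2 q02 F2 (ss ! i) (w ! i) (ss ! Suc i))"

definition npath :: "('a \<Rightarrow> 'a) \<Rightarrow> nat \<Rightarrow> ('q1 \<Rightarrow> 'a \<Rightarrow> 'q1) \<Rightarrow> 'q1 \<Rightarrow> 'q1 set
    \<Rightarrow> ('q2 \<Rightarrow> 'a \<Rightarrow> 'q2) \<Rightarrow> 'q2 \<Rightarrow> 'q2 set
    \<Rightarrow> ('q1 \<times> 'q2) \<times> 'q1 \<times> 'q2 \<times> nat \<Rightarrow> 'a list \<Rightarrow> ('q1 \<times> 'q2) \<times> 'q1 \<times> 'q2 \<times> nat \<Rightarrow> bool" where
  "npath iv k d1 q01 F1 d2 q02 F2 S w T \<longleftrightarrow> (\<exists>ss. nrun iv k d1 q01 F1 d2 q02 F2 S w ss T)"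

definition nedges :: "('a \<Rightarrow> 'a) \<Rightarrow> nat \<Rightarrow> ('q1 \<Rightarrow> 'a \<Rightarrow> 'q1) \<Rightarrow> 'q1 \<Rightarrow> 'q1 set
    \<Rightarrow> ('q2 \<Rightarrow> 'a \<Rightarrow> 'q2) \<Rightarrow> 'q2 \<Rightarrow> 'q2 set
    \<Rightarrow> ((('q1 \<times> 'q2) \<times> 'q1 \<times> 'q2 \<times> nat) \<times> (('q1 \<times> 'q2) \<times> 'q1 \<times> 'q2 \<times> nat)) set" where
  "nedges iv k d1 q01 F1 d2 q02 F2 = {(S, T). \<exists>a. ntrans iv k d1 q01 F1 d2 q02 F2 S a T}"

definition nscc :: "('a \<Rightarrow> 'a) \<Rightarrow> nat \<Rightarrow> ('q1 \<Rightarrow> 'a \<Rightarrow> 'q1) \<Rightarrow> 'q1 \<Rightarrow> 'q1 set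
    \<Rightarrow> ('q2 \<Rightarrow> 'a \<Rightarrow> 'q2) \<Rightarrow> 'q2 \<Rightarrow> 'q2 set
    \<Rightarrow> (('q1 \<times> 'q2) \<times> 'q1 \<times> 'q2 \<times> nat) set \<Rightarrow> bool" where
  "nscc iv k d1 q01 F1 d2 q02 F2 K \<longleftrightarrow>
     (\<exists>S. nstate iv k d1 q01 d2 q02 S \<and>
        K = {T. nstate iv k d1 q01 d2 q02 T \<and>
                (S, T) \<in> (nedges iv k d1 q01 F1 d2 q02 F2)\<^sup>* \<and>
                (T, S) \<in> (nedges iv k d1 q01 F1 d2 q02 F2)\<^sup>*})"

definition nontrivial_scc :: "('a \<Rightarrow> 'a) \<Rightarrow> nat \<Rightarrow> ('q1 \<Rightarrow> 'a \<Rightarrow> 'q1) \<Rightarrow> 'q1 \<Rightarrow> 'q1 set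
    \<Rightarrow> ('q2 \<Rightarrow> 'a \<Rightarrow> 'q2) \<Rightarrow> 'q2 \<Rightarrow> 'q2 set
    \<Rightarrow> (('q1 \<times> 'q2) \<times> 'q1 \<times> 'q2 \<times> nat) set \<Rightarrow> bool" where
  "nontrivial_scc iv k d1 q01 F1 d2 q02 F2 K \<longleftrightarrow>
     nscc iv k d1 q01 F1 d2 q02 F2 K \<and>
     (\<exists>S\<in>K. (S, S) \<in> (nedges iv k d1 q01 F1 d2 q02 F2)\<^sup>+)"

end

theory Submission imports Defs begin

abbreviation P1 :: "('q1 \<times> 'q2) \<times> 'q1 \<times> 'q2 \<times> nat \<Rightarrow> 'q1" where "P1 S \<equiv> fst (fst S)"
abbreviation P2 :: "('q1 \<times> 'q2) \<times> 'q1 \<times> 'q2 \<times> nat \<Rightarrow> 'q2" where "P2 S \<equiv> snd (fst S)"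
abbreviation R1 :: "('q1 \<times> 'q2) \<times> 'q1 \<times> 'q2 \<times> nat \<Rightarrow> 'q1" where "R1 S \<equiv> fst (snd S)"
abbreviation R2 :: "('q1 \<times> 'q2) \<times> 'q1 \<times> 'q2 \<times> nat \<Rightarrow> 'q2" where "R2 S \<equiv> fst (snd (snd S))"
abbreviation LV :: "('q1 \<times> 'q2) \<times> 'q1 \<times> 'q2 \<times> nat \<Rightarrow> nat" where "LV S \<equiv> snd (snd (snd S))"

lemma dstar_Nil[simp]: "dstar d p [] = p" by (simp add: dstar_def)
lemma dstar_Cons[simp]: "dstar d p (a # x) = dstar d (d p a) x" by (simp add: dstar_def)
lemma dstar_append[simp]: "dstar d p (x @ y) = dstar d (dstar d p x) y" by (simp add: dstar_def)

lemma wbar_Nil[simp]: "wbar iv [] = []" by (simp add: wbar_def)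
lemma wbar_Cons[simp]: "wbar iv (a # x) = wbar iv x @ [iv a]" by (simp add: wbar_def)
lemma wbar_append[simp]: "wbar iv (x @ y) = wbar iv y @ wbar iv x" by (simp add: wbar_def)
lemma wbar_length[simp]: "length (wbar iv x) = length x" by (simp add: wbar_def)
lemma wbar_wbar[simp]: "\<forall>a. iv (iv a) = a \<Longrightarrow> wbar iv (wbar iv x) = x"
  by (induction x) (auto simp: wbar_def)

lemma dstar_pow: "dstar d a z = a \<Longrightarrow> dstar d a (concat (replicate n z)) = a"
  by (induction n) auto

lemma len_pow[simp]: "length (concat (replicate n z)) = n * length z"
  by (induction n) auto

lemma trans_facts:
  assumes "ntrans iv k d1 q01 F1 d2 q02 F2 S a T"
  shows "P1 T = d1 (P1 S) a \<and> P2 T = d2 (P2 S) a \<and> R1 S = d1 (R1 T) (iv a) \<and> R2 S = d2 (R2 T) (iv a) \<and>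
   ((LV S = 0 \<and> LV T = 0 \<and> R1 S \<notin> F1 \<and> R2 S \<notin> F2) \<or> (LV S = 0 \<and> LV T = 1 \<and> (R1 S \<in> F1 \<or> R2 S \<in> F2))
     \<or> (1 \<le> LV S \<and> LV S < k \<and> LV T = LV S + 1))"
  using assms by (auto simp: ntrans_def split: prod.splits)

lemma npath_Nil: "npath iv k d1 q01 F1 d2 q02 F2 S [] T \<longleftrightarrow> S = T"
proof
  assume "npath iv k d1 q01 F1 d2 q02 F2 S [] T"
  then show "S = T" by (auto simp: npath_def nrun_def)
next
  assume "S = T"
  then have "nrun iv k d1 q01 F1 d2 q02 F2 S [] [S] T" by (simp add: nrun_def)
  then show "npath iv k d1 q01 F1 d2 q02 F2 S [] T" by (auto simp: npath_def)
qed

lemma npath_Cons: "npath iv k d1 q01 F1 d2 q02 F2 S (a # x) T \<longleftrightarrow>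
   (\<exists>S'. ntrans iv k d1 q01 F1 d2 q02 F2 S a S' \<and> npath iv k d1 q01 F1 d2 q02 F2 S' x T)"
proof
  assume "npath iv k d1 q01 F1 d2 q02 F2 S (a # x) T"
  then obtain ss where r: "nrun iv k d1 q01 F1 d2 q02 F2 S (a # x) ss T" unfolding npath_def by blast
  then have l: "length ss = length x + 2" and s0: "ss ! 0 = S" and sT: "ss ! Suc (length x) = T"
    and tr: "\<And>i. i < Suc (length x) \<Longrightarrow> ntrans iv k d1 q01 F1 d2 q02 F2 (ss ! i) ((a#x) ! i) (ss ! Suc i)"
    unfolding nrun_def by auto
  have t1: "ntrans iv k d1 q01 F1 d2 q02 F2 S a (ss ! 1)" using tr[of 0] s0 by simp
  have "nrun iv k d1 q01 F1 d2 q02 F2 (ss ! 1) x (tl ss) T"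
    unfolding nrun_def
  proof (intro conjI allI impI)
    show "length (tl ss) = length x + 1" using l by simp
    show "tl ss ! 0 = ss ! 1" using l by (simp add: nth_tl)
    show "tl ss ! length x = T" using l sT by (simp add: nth_tl)
    fix i assume i: "i < length x"
    show "ntrans iv k d1 q01 F1 d2 q02 F2 (tl ss ! i) (x ! i) (tl ss ! Suc i)"
      using tr[of "Suc i"] i l by (simp add: nth_tl)
  qed
  then show "\<exists>S'. ntrans iv k d1 q01 F1 d2 q02 F2 S a S' \<and> npath iv k d1 q01 F1 d2 q02 F2 S' x T"
    using t1 unfolding npath_def by blast
next
  assume "\<exists>S'. ntrans iv k d1 q01 F1 d2 q02 F2 S a S' \<and> npath iv k d1 q01 F1 d2 q02 F2 S' x T"
  then obtain S' ss where t: "ntrans iv k d1 q01 F1 d2 q02 F2 S a S'" and r: "nrun iv k d1 q01 F1 d2 q02 F2 S' x ss T"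
    unfolding npath_def by blast
  from r have l: "length ss = length x + 1" and s0: "ss ! 0 = S'" and sT: "ss ! length x = T"
    and tr: "\<And>i. i < length x \<Longrightarrow> ntrans iv k d1 q01 F1 d2 q02 F2 (ss ! i) (x ! i) (ss ! Suc i)"
    unfolding nrun_def by auto
  have "nrun iv k d1 q01 F1 d2 q02 F2 S (a # x) (S # ss) T"
    unfolding nrun_def
  proof (intro conjI allI impI)
    show "length (S # ss) = length (a # x) + 1" using l by simp
    show "(S # ss) ! 0 = S" by simp
    show "(S # ss) ! length (a # x) = T" using sT by simp
    fix i assume i: "i < length (a # x)"
    show "ntrans iv k d1 q01 F1 d2 q02 F2 ((S # ss) ! i) ((a # x) ! i) ((S # ss) ! Suc i)"
    proof (cases i)
      case 0 then show ?thesis using t s0 by simp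
    next
      case (Suc j) then show ?thesis using tr[of j] i by simp
    qed
  qed
  then show "npath iv k d1 q01 F1 d2 q02 F2 S (a # x) T" unfolding npath_def by blast
qed

lemma npath_append: "npath iv k d1 q01 F1 d2 q02 F2 S (x @ y) T \<longleftrightarrow>
   (\<exists>M. npath iv k d1 q01 F1 d2 q02 F2 S x M \<and> npath iv k d1 q01 F1 d2 q02 F2 M y T)"
proof (induction x arbitrary: S)
  case Nil then show ?case by (simp add: npath_Nil)
next
  case (Cons a x) then show ?case by (simp only: append_Cons npath_Cons) blast
qed

lemma nrun_split:
  assumes r: "nrun iv k d1 q01 F1 d2 q02 F2 S x ss T" and i: "i \<le> length x"
  shows "npath iv k d1 q01 F1 d2 q02 F2 S (take i x) (ss ! i) \<and> npath iv k d1 q01 F1 d2 q02 F2 (ss ! i) (drop i x) T"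
proof -
  from r have l: "length ss = length x + 1" and s0: "ss ! 0 = S" and sT: "ss ! length x = T"
    and tr: "\<And>j. j < length x \<Longrightarrow> ntrans iv k d1 q01 F1 d2 q02 F2 (ss ! j) (x ! j) (ss ! Suc j)"
    unfolding nrun_def by auto
  have lt: "length (take i x) = i" using i by simp
  have "nrun iv k d1 q01 F1 d2 q02 F2 S (take i x) (take (Suc i) ss) (ss ! i)"
    unfolding nrun_def lt
  proof (intro conjI allI impI)
    show "length (take (Suc i) ss) = i + 1" using l i by simp
    show "take (Suc i) ss ! 0 = S" using s0 by simp
    show "take (Suc i) ss ! i = ss ! i" by simp
    fix j assume j: "j < i"
    then show "ntrans iv k d1 q01 F1 d2 q02 F2 (take (Suc i) ss ! j) (take i x ! j) (take (Suc i) ss ! Suc j)"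
      using tr[of j] i by simp
  qed
  moreover have ld: "length (drop i x) = length x - i" by simp
  have "nrun iv k d1 q01 F1 d2 q02 F2 (ss ! i) (drop i x) (drop i ss) T"
    unfolding nrun_def ld
  proof (intro conjI allI impI)
    show "length (drop i ss) = length x - i + 1" using l i by simp
    show "drop i ss ! 0 = ss ! i" using l i by simp
    show "drop i ss ! (length x - i) = T" using l i sT by simp
    fix j assume j: "j < length x - i"
    then show "ntrans iv k d1 q01 F1 d2 q02 F2 (drop i ss ! j) (drop i x ! j) (drop i ss ! Suc j)"
      using tr[of "i + j"] i l by simp
  qed
  ultimately show ?thesis unfolding npath_def by blast
qed

lemma npath_pow: "npath iv k d1 q01 F1 d2 q02 F2 A x A \<Longrightarrow> npath iv k d1 q01 F1 d2 q02 F2 A (concat (replicate m x)) A"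
  by (induction m) (auto simp del: split_paired_Ex simp: npath_Nil npath_append)

lemma edges_npath: "(S, T) \<in> (nedges iv k d1 q01 F1 d2 q02 F2)\<^sup>* \<Longrightarrow> \<exists>x. npath iv k d1 q01 F1 d2 q02 F2 S x T"
proof (induction rule: rtrancl_induct)
  case base then show ?case using npath_Nil by metis
next
  case (step T U)
  then obtain x a where "npath iv k d1 q01 F1 d2 q02 F2 S x T" "ntrans iv k d1 q01 F1 d2 q02 F2 T a U"
    by (auto simp: nedges_def)
  then have "npath iv k d1 q01 F1 d2 q02 F2 S (x @ [a]) U" by (auto simp del: split_paired_Ex simp: npath_append npath_Cons npath_Nil)
  then show ?case by blast
qed


lemma path_facts:
  "npath iv k d1 q01 F1 d2 q02 F2 S x T \<Longrightarrow>
    P1 T = dstar d1 (P1 S) x \<and> P2 T = dstar d2 (P2 S) x \<and>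
    R1 S = dstar d1 (R1 T) (wbar iv x) \<and> R2 S = dstar d2 (R2 T) (wbar iv x) \<and>
    LV S \<le> LV T \<and> LV T \<le> LV S + length x \<and> (1 \<le> LV S \<longrightarrow> LV T = LV S + length x)"
proof (induction x arbitrary: S)
  case Nil then show ?case by (simp add: npath_Nil)
next
  case (Cons a x)
  from Cons.prems(1) obtain S' where t: "ntrans iv k d1 q01 F1 d2 q02 F2 S a S'" and p: "npath iv k d1 q01 F1 d2 q02 F2 S' x T"
    unfolding npath_Cons by blast
  note IH = Cons.IH[OF p]
  note tf = trans_facts[OF t]
  note i1 = IH[THEN conjunct1] IH[THEN conjunct2, THEN conjunct1] IH[THEN conjunct2, THEN conjunct2, THEN conjunct1]
    IH[THEN conjunct2, THEN conjunct2, THEN conjunct2, THEN conjunct1]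
  note t1 = tf[THEN conjunct1] tf[THEN conjunct2, THEN conjunct1] tf[THEN conjunct2, THEN conjunct2, THEN conjunct1]
    tf[THEN conjunct2, THEN conjunct2, THEN conjunct2, THEN conjunct1]
  have c1: "P1 T = dstar d1 (P1 S) (a # x) \<and> P2 T = dstar d2 (P2 S) (a # x)"
    using i1 t1 by simp
  have c2: "R1 S = dstar d1 (R1 T) (wbar iv (a # x)) \<and> R2 S = dstar d2 (R2 T) (wbar iv (a # x))"
    using i1 t1 by simp
  note l1 = IH[THEN conjunct2, THEN conjunct2, THEN conjunct2, THEN conjunct2, THEN conjunct1]
    IH[THEN conjunct2, THEN conjunct2, THEN conjunct2, THEN conjunct2, THEN conjunct2, THEN conjunct1]
    IH[THEN conjunct2, THEN conjunct2, THEN conjunct2, THEN conjunct2, THEN conjunct2, THEN conjunct2]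
  have l2: "(LV S = 0 \<and> LV S' = 0) \<or> (LV S = 0 \<and> LV S' = 1) \<or> (1 \<le> LV S \<and> LV S' = LV S + 1)"
    using tf[THEN conjunct2, THEN conjunct2, THEN conjunct2, THEN conjunct2] by blast
  have c3a: "LV S \<le> LV T" using l2 l1(1) by (elim disjE conjE) linarith+
  have c3b: "LV T \<le> LV S + length (a # x)" using l2 l1(2) by (elim disjE conjE) (simp; linarith)+
  have c3c: "1 \<le> LV S \<longrightarrow> LV T = LV S + length (a # x)"
  proof
    assume "1 \<le> LV S"
    then have "LV S' = LV S + 1" using l2 by auto
    then show "LV T = LV S + length (a # x)" using l1(3) by simp
  qed
  show ?case by (rule conjI[OF conjunct1[OF c1] conjI[OF conjunct2[OF c1] conjI[OF conjunct1[OF c2] conjI[OF conjunct2[OF c2] conjI[OF c3a conjI[OF c3b c3c]]]]]])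
qed

lemma path_nf:
  "npath iv k d1 q01 F1 d2 q02 F2 S x T \<Longrightarrow> LV T = 0 \<Longrightarrow>
    \<forall>i < length x. dstar d1 (R1 T) (wbar iv (drop i x)) \<notin> F1 \<and> dstar d2 (R2 T) (wbar iv (drop i x)) \<notin> F2"
proof (induction x arbitrary: S)
  case Nil then show ?case by simp
next
  case (Cons a x)
  from Cons.prems(1) obtain S' where t: "ntrans iv k d1 q01 F1 d2 q02 F2 S a S'" and p: "npath iv k d1 q01 F1 d2 q02 F2 S' x T"
    unfolding npath_Cons by blast
  note IH = Cons.IH[OF p Cons.prems(2)]
  note tf = trans_facts[OF t]
  have pf: "R1 S = dstar d1 (R1 T) (wbar iv (a # x)) \<and> R2 S = dstar d2 (R2 T) (wbar iv (a # x))"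
    using path_facts[OF Cons.prems(1)] by blast
  have "LV S' = 0" using path_facts[OF p] Cons.prems(2) by simp
  then have "R1 S \<notin> F1 \<and> R2 S \<notin> F2" using tf by auto
  show ?case
  proof (intro allI impI)
    fix i assume i: "i < length (a # x)"
    show "dstar d1 (R1 T) (wbar iv (drop i (a # x))) \<notin> F1 \<and> dstar d2 (R2 T) (wbar iv (drop i (a # x))) \<notin> F2"
    proof (cases i)
      case 0 then show ?thesis using pf \<open>R1 S \<notin> F1 \<and> R2 S \<notin> F2\<close> by simp
    next
      case (Suc j) then show ?thesis using IH i by simp
    qed
  qed
qed

definition Good :: "('q \<Rightarrow> 'a \<Rightarrow> 'q) \<Rightarrow> ('a \<Rightarrow> 'a) \<Rightarrow> 'q \<Rightarrow> 'q set \<Rightarrow> 'a list \<Rightarrow> bool" where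
  "Good d iv \<rho> Fs X \<longleftrightarrow> (\<forall>i < length X. dstar d \<rho> (wbar iv (drop i X)) \<notin> Fs)"

lemma Good_app:
  assumes "Good d iv \<rho> Fs X" "Good d iv \<rho> Fs z" "dstar d \<rho> (wbar iv z) = \<rho>"
  shows "Good d iv \<rho> Fs (X @ z)"
  unfolding Good_def
proof (intro allI impI)
  fix i assume i: "i < length (X @ z)"
  show "dstar d \<rho> (wbar iv (drop i (X @ z))) \<notin> Fs"
  proof (cases "i < length X")
    case True then show ?thesis using assms unfolding Good_def by simp
  next
    case False then show ?thesis using assms i unfolding Good_def by simp
  qed
qed

lemma Good_pow:
  assumes "Good d iv \<rho> Fs X" "Good d iv \<rho> Fs z" "dstar d \<rho> (wbar iv z) = \<rho>"
  shows "Good d iv \<rho> Fs (X @ concat (replicate m z))"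
proof (induction m)
  case 0 then show ?case using assms by simp
next
  case (Suc m)
  have "X @ concat (replicate (Suc m) z) = (X @ concat (replicate m z)) @ z"
    by (simp add: replicate_append_same[symmetric])
  then show ?case using Good_app[OF Suc assms(2,3)] by simp
qed

lemma good_word:
  assumes zr: "dstar d \<rho> (wbar iv z) = \<rho>" and wg: "dstar d g (wbar iv w) = \<rho>"
    and gu: "\<forall>i<length u. dstar d \<rho> (wbar iv (drop i u)) \<notin> Fs"
    and gz: "\<forall>i<length z. dstar d \<rho> (wbar iv (drop i z)) \<notin> Fs"
    and gw: "\<forall>i<c. dstar d g (wbar iv (drop i w)) \<notin> Fs"
    and i: "i < length u + m * length z + c"
  shows "dstar d g (wbar iv (drop i (u @ concat (replicate m z) @ w))) \<notin> Fs"
proof -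
  define X where "X = u @ concat (replicate m z)"
  have GX: "Good d iv \<rho> Fs X" unfolding X_def
    by (rule Good_pow) (use gu gz zr in \<open>auto simp: Good_def\<close>)
  have lX: "length X = length u + m * length z" by (simp add: X_def)
  have eq: "u @ concat (replicate m z) @ w = X @ w" by (simp add: X_def)
  show ?thesis
  proof (cases "i < length X")
    case True
    then show ?thesis unfolding eq using GX wg by (simp add: Good_def)
  next
    case False
    then show ?thesis unfolding eq using gw i lX by simp
  qed
qed


lemma pow_mult: "concat (replicate m (concat (replicate e z))) = concat (replicate (m * e) z)"
  by (induction m) (auto simp: replicate_add)

lemma pow_add: "concat (replicate (m + e) z) = concat (replicate m z) @ concat (replicate e z)"
  by (simp add: replicate_add)

lemma prefix_self_pow:
  assumes "1 \<le> length V" "prefix w (V @ w)"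
  shows "\<exists>m\<ge>1. prefix w (concat (replicate m V))"
  using assms(2)
proof (induction "length w" arbitrary: w rule: less_induct)
  case less
  from less.prems consider "prefix w V" | us where "w = V @ us" "prefix us w"
    by (auto simp: prefix_append)
  then show ?case
  proof cases
    case 1 then show ?thesis by (intro exI[of _ 1]) simp
  next
    case 2
    then have "prefix us (V @ us)" by simp
    moreover have "length us < length w" using 2 assms(1) by (auto simp: Suc_le_eq)
    ultimately obtain m where "m \<ge> 1" "prefix us (concat (replicate m V))" using less.hyps by blast
    then have "prefix w (concat (replicate (Suc m) V))" using 2 by simp
    then show ?thesis by (intro exI[of _ "Suc m"]) simp
  qed
qed

lemma take_pow: "j \<le> m \<Longrightarrow> take (j * length z) (concat (replicate m z)) = concat (replicate j z)"
proof (induction j arbitrary: m)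
  case 0 then show ?case by simp
next
  case (Suc j)
  then obtain m' where m: "m = Suc m'" by (cases m) auto
  with Suc show ?case by simp
qed

lemma dstar_closed: "q \<in> Q \<Longrightarrow> \<forall>q\<in>Q. \<forall>a. d q a \<in> Q \<Longrightarrow> dstar d q x \<in> Q"
  by (induction x arbitrary: q) auto

lemma pigeon:
  fixes f :: "nat \<Rightarrow> 'b"
  assumes "finite Q" "\<And>j. f j \<in> Q"
  shows "\<exists>i j. i < j \<and> f i = (f j :: 'b)"
proof -
  have "\<not> inj_on f {..card Q}"
  proof
    assume "inj_on f {..card Q}"
    then have "card (f ` {..card Q}) = Suc (card Q)" by (simp add: card_image)
    moreover have "card (f ` {..card Q}) \<le> card Q" using assms by (intro card_mono) auto
    ultimately show False by simp
  qed
  then obtain x y where "x \<noteq> y" "f x = f y" unfolding inj_on_def by blast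
  then show ?thesis by (metis linorder_neqE_nat)
qed

lemma take_mod_pow:
  assumes "dstar d a z = a" "i \<le> J * length z" "1 \<le> length z"
  shows "dstar d a (take i (concat (replicate J z))) = dstar d a (take (i mod length z) z)"
  using assms(2)
proof (induction J arbitrary: i)
  case 0 then show ?case by simp
next
  case (Suc J)
  show ?case
  proof (cases "i < length z")
    case True then show ?thesis by simp
  next
    case False
    then have "take i (concat (replicate (Suc J) z)) = z @ take (i - length z) (concat (replicate J z))"
      by simp
    moreover have "(i - length z) mod length z = i mod length z" using False
      by (simp add: mod_if le_mod_geq)
    ultimately show ?thesis using Suc.IH[of "i - length z"] Suc.prems assms(1) False by simp
  qed
qed

lemma pow_comm: "concat (replicate J x) @ x = x @ concat (replicate J x)"
  by (induction J) auto

lemma wbar_pow: "wbar iv (concat (replicate J z)) = concat (replicate J (wbar iv z))"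
  by (induction J) (auto simp: pow_comm)

lemma drop_mod_pow:
  assumes "dstar d r (wbar iv z) = r" "i \<le> J * length z" "1 \<le> length z"
  shows "dstar d r (wbar iv (drop i (concat (replicate J z)))) = dstar d r (wbar iv (drop (i mod length z) z))"
  using assms(2)
proof (induction J arbitrary: i)
  case 0 then show ?case using assms(1) by simp
next
  case (Suc J)
  show ?case
  proof (cases "i < length z")
    case True then show ?thesis using dstar_pow[of d r "wbar iv z" J] assms(1)
      by (simp add: wbar_pow)
  next
    case False
    then have "drop i (concat (replicate (Suc J) z)) = drop (i - length z) (concat (replicate J z))"
      by simp
    moreover have "(i - length z) mod length z = i mod length z" using False
      by (simp add: le_mod_geq)
    ultimately show ?thesis using Suc.IH[of "i - length z"] Suc.prems assms(1) False by simp
  qed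
qed


lemma drop_take_app: "i \<le> c \<Longrightarrow> drop i (take c w) @ drop c w = drop i w"
  by (metis append_take_drop_id drop_append le_add_diff_inverse2 length_drop drop_take
      add_diff_cancel_left' diff_add_zero drop_drop drop_eq_Nil2 min.absorb2 order_refl self_append_conv)

lemma wbar_split: "i \<le> length Y \<Longrightarrow> wbar iv Y = wbar iv (drop i Y) @ wbar iv (take i Y)"
  by (metis append_take_drop_id wbar_append)

lemma wbar_inj: "\<forall>a. iv (iv a) = a \<Longrightarrow> wbar iv x = wbar iv y \<Longrightarrow> x = y"
  by (metis wbar_wbar)


context
  fixes iv :: "'a \<Rightarrow> 'a" and k :: nat
    and d1 :: "'q1 \<Rightarrow> 'a \<Rightarrow> 'q1" and q01 :: 'q1 and F1 :: "'q1 set"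
    and d2 :: "'q2 \<Rightarrow> 'a \<Rightarrow> 'q2" and q02 :: 'q2 and F2 :: "'q2 set"
  assumes inv: "\<forall>a. iv (iv a) = a"
    and k: "1 \<le> k"
    and reg: "regular (hairpin iv k (dlang d1 q01 F1) {u. wbar iv u \<in> dlang d2 q02 F2})"
    and trim: "\<forall>S. nstate iv k d1 q01 d2 q02 S \<longrightarrow>
                 (\<exists>I u. ninit iv k d1 q01 d2 q02 I \<and> npath iv k d1 q01 F1 d2 q02 F2 I u S) \<and>
                 (\<exists>G u. nfinal iv k d1 q01 d2 q02 G \<and> npath iv k d1 q01 F1 d2 q02 F2 S u G)"
begin

abbreviation "NP \<equiv> npath iv k d1 q01 F1 d2 q02 F2"

lemma CL1:
  assumes nstA: "nstate iv k d1 q01 d2 q02 A" and loop: "NP A z A" and zl: "1 \<le> length z"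
    and path: "NP A w F" and fin: "nfinal iv k d1 q01 d2 q02 F"
  shows "\<exists>m\<ge>1. prefix w (concat (replicate m z))"
proof -
  note fz = path_facts[OF loop]
  have lvA: "LV A = 0" using fz zl by auto
  have z1: "dstar d1 (P1 A) z = P1 A" "dstar d2 (P2 A) z = P2 A"
    "dstar d1 (R1 A) (wbar iv z) = R1 A" "dstar d2 (R2 A) (wbar iv z) = R2 A"
    using fz by (metis)+
  note nfz = path_nf[OF loop lvA]
  obtain I u where I: "ninit iv k d1 q01 d2 q02 I" and pu: "NP I u A" using trim nstA by blast
  have I0: "P1 I = q01" "P2 I = q02" using I by (auto simp: ninit_def split: prod.splits)
  note fu = path_facts[OF pu]
  have a1: "dstar d1 q01 u = P1 A" "dstar d2 q02 u = P2 A" using fu I0 by metis+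
  note nfu = path_nf[OF pu lvA]
  note fw = path_facts[OF path]
  have lvF: "LV F = k" using fin by (auto simp: nfinal_def split: prod.splits)
  have kw: "k \<le> length w" using fw lvF lvA by simp
  define c where "c = length w - k"
  have ckw: "c + k = length w" "c \<le> length w" using kw c_def by auto
  have "NP A (take c w @ drop c w) F" using path by simp
  then obtain M where pM1: "NP A (take c w) M" and pM2: "NP M (drop c w) F"
    unfolding npath_append by blast
  have ldw: "length (drop c w) = k" using ckw by simp
  note fM = path_facts[OF pM2]
  have lvM: "LV M = 0"
  proof (rule ccontr)
    assume "LV M \<noteq> 0"
    then have "LV F = LV M + k" using fM ldw by simp
    then show False using lvF \<open>LV M \<noteq> 0\<close> by simp
  qed
  obtain b w2 where dw: "drop c w = b # w2" using ldw k by (cases "drop c w") auto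
  then obtain M' where tM: "ntrans iv k d1 q01 F1 d2 q02 F2 M b M'" and pM': "NP M' w2 F"
    using pM2 unfolding dw npath_Cons by blast
  have "LV F \<le> LV M' + length w2" using path_facts[OF pM'] by blast
  moreover have "length w2 + 1 = k" using ldw dw by simp
  ultimately have "LV M' \<ge> 1" using lvF by simp
  then have hit: "R1 M \<in> F1 \<or> R2 M \<in> F2" using trans_facts[OF tM] lvM by auto
  have RM: "R1 M = dstar d1 (R1 F) (wbar iv (drop c w))" "R2 M = dstar d2 (R2 F) (wbar iv (drop c w))"
    using fM by blast+
  note nfw0 = path_nf[OF pM1 lvM]
  have nfw: "\<forall>i<c. dstar d1 (R1 F) (wbar iv (drop i w)) \<notin> F1 \<and> dstar d2 (R2 F) (wbar iv (drop i w)) \<notin> F2"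
  proof (intro allI impI)
    fix i assume i: "i < c"
    have e: "drop i w = drop i (take c w) @ drop c w" using drop_take_app[of i c w] i by simp
    have "length (take c w) = c" using ckw by simp
    then show "dstar d1 (R1 F) (wbar iv (drop i w)) \<notin> F1 \<and> dstar d2 (R2 F) (wbar iv (drop i w)) \<notin> F2"
      using nfw0 i RM unfolding e by simp
  qed
  have wR: "dstar d1 (R1 F) (wbar iv w) = R1 A" "dstar d2 (R2 F) (wbar iv w) = R2 A" using fw by metis+
  have wP: "dstar d1 (P1 A) w = P1 F" "dstar d2 (P2 A) w = P2 F" using fw by metis+
  obtain \<beta> where br: "dstar d1 (P1 F) \<beta> = R1 F" "dstar d2 (P2 F) (wbar iv \<beta>) = R2 F"
    using fin by (auto simp: nfinal_def nstate_def bridge_def split: prod.splits)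
  obtain dd :: "nat \<Rightarrow> 'a \<Rightarrow> nat" and q0 FD Q where fQ: "finite Q" and q0Q: "q0 \<in> Q" and cl: "\<forall>q\<in>Q. \<forall>a. dd q a \<in> Q"
    and HD: "hairpin iv k (dlang d1 q01 F1) {u. wbar iv u \<in> dlang d2 q02 F2} = dlang dd q0 FD"
    using reg unfolding regular_def by (elim exE conjE) (rule that; assumption)
  define f where "f j = dstar dd q0 (u @ concat (replicate j z))" for j
  have fQj: "f j \<in> Q" for j unfolding f_def by (rule dstar_closed[OF q0Q cl])
  obtain n n2 where nn: "n < n2" "f n = f n2" using pigeon[of Q f, OF fQ fQj] by (elim exE conjE) (rule that)
  define e where "e = n2 - n"
  have e1: "1 \<le> e" and n2e: "n2 = n + e" using nn(1) unfolding e_def by linarith+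
  define zn where "zn = concat (replicate n z)"
  define ze where "ze = concat (replicate e z)"
  have zne: "concat (replicate n2 z) = zn @ ze" unfolding n2e zn_def ze_def by (simp add: replicate_add)
  have pump: "dstar dd q0 (u @ zn @ ze @ Y) = dstar dd q0 (u @ zn @ Y)" for Y
  proof -
    have "dstar dd q0 (u @ zn @ ze) = dstar dd q0 (u @ zn)"
      using nn(2) unfolding f_def zne zn_def by simp
    then show ?thesis by (metis append_assoc dstar_append)
  qed
  have lzn: "length zn = n * length z" and lze: "length ze = e * length z" by (simp_all add: zn_def ze_def)
  have dzn1: "dstar d1 (P1 A) zn = P1 A" "dstar d2 (P2 A) zn = P2 A" unfolding zn_def using z1 by (simp_all add: dstar_pow)
  have dze1: "dstar d1 (P1 A) ze = P1 A" "dstar d2 (P2 A) ze = P2 A" unfolding ze_def using z1 by (simp_all add: dstar_pow)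
  define Y where "Y = u @ zn @ w"
  have lY: "length Y = length u + n * length z + c + k" using ckw lzn by (simp add: Y_def)
  have Y1: "dstar d1 q01 Y = P1 F" "dstar d2 q02 Y = P2 F" unfolding Y_def using a1 dzn1 wP by simp_all
  define \<gamma>0 where "\<gamma>0 = u @ zn @ take c w"
  define \<alpha>0 where "\<alpha>0 = drop c w"
  have Yga: "Y = \<gamma>0 @ \<alpha>0" by (simp add: Y_def \<gamma>0_def \<alpha>0_def)
  have eqh: "Y @ \<beta> @ wbar iv Y = \<gamma>0 @ \<alpha>0 @ \<beta> @ wbar iv \<alpha>0 @ wbar iv \<gamma>0"
    using Yga by simp
  have la0: "length \<alpha>0 = k" using ldw by (simp add: \<alpha>0_def)
  have s1: "dstar d1 q01 (\<gamma>0 @ \<alpha>0 @ \<beta> @ wbar iv \<alpha>0) = R1 M"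
  proof -
    have e: "\<gamma>0 @ \<alpha>0 @ \<beta> @ wbar iv \<alpha>0 = Y @ \<beta> @ wbar iv \<alpha>0" using Yga by simp
    have "dstar d1 q01 (Y @ \<beta> @ wbar iv \<alpha>0) = R1 M" using Y1 br RM by (simp add: \<alpha>0_def)
    then show ?thesis unfolding e .
  qed
  have s2: "dstar d2 q02 (wbar iv (\<alpha>0 @ \<beta> @ wbar iv \<alpha>0 @ wbar iv \<gamma>0)) = R2 M"
  proof -
    have "wbar iv (\<alpha>0 @ \<beta> @ wbar iv \<alpha>0 @ wbar iv \<gamma>0) = Y @ wbar iv \<beta> @ wbar iv \<alpha>0"
      using Yga inv by simp
    moreover have "dstar d2 q02 (Y @ wbar iv \<beta> @ wbar iv \<alpha>0) = R2 M" using Y1 br RM by (simp add: \<alpha>0_def)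
    ultimately show ?thesis by simp
  qed
  have memb: "\<gamma>0 @ \<alpha>0 @ \<beta> @ wbar iv \<alpha>0 \<in> dlang d1 q01 F1 \<or>
          \<alpha>0 @ \<beta> @ wbar iv \<alpha>0 @ wbar iv \<gamma>0 \<in> {u. wbar iv u \<in> dlang d2 q02 F2}"
    using hit s1 s2 unfolding dlang_def by auto
  have hin: "Y @ \<beta> @ wbar iv Y \<in> hairpin iv k (dlang d1 q01 F1) {u. wbar iv u \<in> dlang d2 q02 F2}"
    unfolding hairpin_def mem_Collect_eq
    by (rule exI[of _ \<gamma>0], rule exI[of _ \<alpha>0], rule exI[of _ \<beta>]) (intro conjI eqh la0 memb[unfolded mem_Collect_eq])
  define Z where "Z = u @ zn @ ze @ w @ \<beta> @ wbar iv Y"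
  have Zin: "Z \<in> hairpin iv k (dlang d1 q01 F1) {u. wbar iv u \<in> dlang d2 q02 F2}"
  proof -
    have h1: "dstar dd q0 (Y @ \<beta> @ wbar iv Y) \<in> FD" using hin unfolding HD by (simp add: dlang_def)
    have "Y @ \<beta> @ wbar iv Y = u @ zn @ w @ \<beta> @ wbar iv Y" by (simp add: Y_def)
    then have "dstar dd q0 (u @ zn @ w @ \<beta> @ wbar iv Y) \<in> FD" using h1 by metis
    then have "dstar dd q0 Z \<in> FD" using pump[of "w @ \<beta> @ wbar iv Y"] unfolding Z_def by simp
    then have "Z \<in> dlang dd q0 FD" by (simp add: dlang_def)
    then show ?thesis unfolding HD .
  qed
  obtain \<gamma> \<alpha> \<beta>' where Zeq: "Z = \<gamma> @ \<alpha> @ \<beta>' @ wbar iv \<alpha> @ wbar iv \<gamma>" and la: "length \<alpha> = k"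
    and mem: "\<gamma> @ \<alpha> @ \<beta>' @ wbar iv \<alpha> \<in> dlang d1 q01 F1 \<or>
              \<alpha> @ \<beta>' @ wbar iv \<alpha> @ wbar iv \<gamma> \<in> {u. wbar iv u \<in> dlang d2 q02 F2}"
    using CollectD[OF Zin[unfolded hairpin_def]] by (elim exE conjE) (rule that; assumption)
  have lzn': "length zn \<le> length zn + length ze" by simp
  have big: "length u + n * length z + c \<le> length \<gamma>"
  proof (rule ccontr)
    assume "\<not> ?thesis"
    then have ilt: "length \<gamma> < length u + n * length z + c" by simp
    define i where "i = length \<gamma>"
    have iY: "i \<le> length Y" using ilt lY unfolding i_def by simp
    define X where "X = u @ zn @ ze @ w @ \<beta>"
    have ZX: "Z = X @ wbar iv Y" by (simp add: Z_def X_def)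
    have Z3: "Z = (X @ wbar iv (drop i Y)) @ wbar iv (take i Y)" using ZX wbar_split[OF iY] by simp
    have Z2: "Z = (\<gamma> @ \<alpha> @ \<beta>' @ wbar iv \<alpha>) @ wbar iv \<gamma>" using Zeq by simp
    have ll: "length (wbar iv \<gamma>) = length (wbar iv (take i Y))" using iY by (simp add: i_def)
    have e1: "\<gamma> @ \<alpha> @ \<beta>' @ wbar iv \<alpha> = X @ wbar iv (drop i Y)"
      using trans[OF Z2[symmetric] Z3] ll append_eq_append_conv by blast
    have X1: "dstar d1 q01 X = R1 F" using a1 dzn1 dze1 wP br by (simp add: X_def)
    have gw1: "dstar d1 (R1 F) (wbar iv (drop i (u @ concat (replicate n z) @ w))) \<notin> F1"
    proof (rule good_word[where \<rho> = "R1 A" and c = c])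
      show "dstar d1 (R1 A) (wbar iv z) = R1 A" by (rule z1(3))
      show "dstar d1 (R1 F) (wbar iv w) = R1 A" by (rule wR(1))
      show "\<forall>i<length u. dstar d1 (R1 A) (wbar iv (drop i u)) \<notin> F1" using nfu by blast
      show "\<forall>i<length z. dstar d1 (R1 A) (wbar iv (drop i z)) \<notin> F1" using nfz by blast
      show "\<forall>i<c. dstar d1 (R1 F) (wbar iv (drop i w)) \<notin> F1" using nfw by blast
      show "i < length u + n * length z + c" using ilt by (simp add: i_def)
    qed
    have X2: "dstar d2 q02 (u @ zn @ w @ wbar iv \<beta>) = R2 F" using a1 dzn1 wP br by simp
    define Y2 where "Y2 = u @ zn @ ze @ w"
    have iY2: "i \<le> length Y2" using iY by (simp add: Y_def Y2_def)
    have wZ: "wbar iv Z = (u @ zn @ w @ wbar iv \<beta>) @ wbar iv Y2" using inv by (simp add: Z_def Y_def Y2_def)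
    have wZ3: "wbar iv Z = ((u @ zn @ w @ wbar iv \<beta>) @ wbar iv (drop i Y2)) @ wbar iv (take i Y2)"
      using wZ wbar_split[OF iY2] by simp
    have wZ2: "wbar iv Z = (\<gamma> @ \<alpha> @ wbar iv \<beta>' @ wbar iv \<alpha>) @ wbar iv \<gamma>" using Zeq inv by simp
    have ll2: "length (wbar iv \<gamma>) = length (wbar iv (take i Y2))" using iY2 by (simp add: i_def)
    have e2: "\<gamma> @ \<alpha> @ wbar iv \<beta>' @ wbar iv \<alpha> = (u @ zn @ w @ wbar iv \<beta>) @ wbar iv (drop i Y2)"
      using trans[OF wZ2[symmetric] wZ3] ll2 append_eq_append_conv by blast
    have Y2e: "Y2 = u @ concat (replicate (n + e) z) @ w" using zne n2e by (simp add: Y2_def)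
    have gw2: "dstar d2 (R2 F) (wbar iv (drop i (u @ concat (replicate (n + e) z) @ w))) \<notin> F2"
    proof (rule good_word[where \<rho> = "R2 A" and c = c])
      show "dstar d2 (R2 A) (wbar iv z) = R2 A" by (rule z1(4))
      show "dstar d2 (R2 F) (wbar iv w) = R2 A" by (rule wR(2))
      show "\<forall>i<length u. dstar d2 (R2 A) (wbar iv (drop i u)) \<notin> F2" using nfu by blast
      show "\<forall>i<length z. dstar d2 (R2 A) (wbar iv (drop i z)) \<notin> F2" using nfz by blast
      show "\<forall>i<c. dstar d2 (R2 F) (wbar iv (drop i w)) \<notin> F2" using nfw by blast
      have "n * length z \<le> (n + e) * length z" by simp
      then show "i < length u + (n + e) * length z + c" using ilt unfolding i_def by linarith
    qed
    have wm: "wbar iv (\<alpha> @ \<beta>' @ wbar iv \<alpha> @ wbar iv \<gamma>) = \<gamma> @ \<alpha> @ wbar iv \<beta>' @ wbar iv \<alpha>"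
      using inv by simp
    from mem show False
    proof
      assume "\<gamma> @ \<alpha> @ \<beta>' @ wbar iv \<alpha> \<in> dlang d1 q01 F1"
      then have "dstar d1 q01 (X @ wbar iv (drop i Y)) \<in> F1" unfolding e1 dlang_def by simp
      then show False using X1 gw1 by (simp add: Y_def zn_def)
    next
      assume "\<alpha> @ \<beta>' @ wbar iv \<alpha> @ wbar iv \<gamma> \<in> {u. wbar iv u \<in> dlang d2 q02 F2}"
      then have "dstar d2 q02 ((u @ zn @ w @ wbar iv \<beta>) @ wbar iv (drop i Y2)) \<in> F2"
        unfolding mem_Collect_eq wm e2 dlang_def by simp
      then have "dstar d2 (R2 F) (wbar iv (drop i Y2)) \<in> F2" using X2 by (simp only: dstar_append)
      then show False using gw2 Y2e by simp
    qed
  qed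
  define G where "G = \<gamma> @ \<alpha>"
  define L where "L = length Y"
  have lG: "L \<le> length G" using big la lY by (simp add: G_def L_def)
  have ZG0: "Z = G @ \<beta>' @ wbar iv G" using Zeq by (simp add: G_def)
  have ws: "wbar iv G = wbar iv (drop L G) @ wbar iv (take L G)" using lG by (rule wbar_split)
  have ZG: "Z = (G @ \<beta>' @ wbar iv (drop L G)) @ wbar iv (take L G)" using ZG0 ws by simp
  have ZX: "Z = (u @ zn @ ze @ w @ \<beta>) @ wbar iv Y" by (simp add: Z_def)
  have ll: "length (wbar iv (take L G)) = length (wbar iv Y)" using lG by (simp add: L_def)
  have "wbar iv (take L G) = wbar iv Y"
    using trans[OF ZG[symmetric] ZX] ll append_eq_append_conv by blast
  then have tG: "take L G = Y" using wbar_inj[OF inv] by blast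
  have "take L Z = take L G" using ZG0 lG by simp
  then have tZ: "take L Z = Y" using tG by simp
  have "take L Z = u @ zn @ take (length w) (ze @ w @ \<beta> @ wbar iv Y)"
    by (simp add: Z_def L_def Y_def)
  then have "take (length w) (ze @ w @ \<beta> @ wbar iv Y) = w" using tZ by (simp add: Y_def)
  moreover have "take (length w) (ze @ w @ \<beta> @ wbar iv Y) = take (length w) (ze @ w)" by simp
  ultimately have "prefix w (ze @ w)" by (metis take_is_prefix)
  moreover have "1 \<le> length ze" using e1 zl lze by (simp add: Suc_le_eq)
  ultimately obtain m where m: "m \<ge> 1" "prefix w (concat (replicate m ze))"
    using prefix_self_pow by blast
  then have "prefix w (concat (replicate (m * e) z))" by (simp add: ze_def pow_mult)
  moreover have "m * e \<ge> 1" using m(1) e1 by simp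
  ultimately show ?thesis by blast
qed


lemma main_cover:
  assumes scc: "nscc iv k d1 q01 F1 d2 q02 F2 K" and AK: "A \<in> K"
    and loop: "nrun iv k d1 q01 F1 d2 q02 F2 A z ts A" and zl: "1 \<le> length z"
    and CK: "C \<in> K"
  shows "\<exists>r<length z. ts ! r = C"
proof -
  let ?E = "nedges iv k d1 q01 F1 d2 q02 F2"
  from scc obtain S0 where Kdef: "K = {T. nstate iv k d1 q01 d2 q02 T \<and> (S0, T) \<in> ?E\<^sup>* \<and> (T, S0) \<in> ?E\<^sup>*}"
    unfolding nscc_def by blast
  have A1: "nstate iv k d1 q01 d2 q02 A" "(S0, A) \<in> ?E\<^sup>*" "(A, S0) \<in> ?E\<^sup>*" using AK Kdef by auto
  have C1: "(S0, C) \<in> ?E\<^sup>*" "(C, S0) \<in> ?E\<^sup>*" using CK Kdef by auto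
  obtain x where px: "NP A x C" using edges_npath[OF rtrancl_trans[OF A1(3) C1(1)]] by blast
  obtain y where py: "NP C y A" using edges_npath[OF rtrancl_trans[OF C1(2) A1(2)]] by blast
  have lpz: "NP A z A" using loop unfolding npath_def by blast
  note fz = path_facts[OF lpz]
  have lvA: "LV A = 0" using fz zl by auto
  have z1: "dstar d1 (P1 A) z = P1 A" "dstar d2 (P2 A) z = P2 A"
    "dstar d1 (R1 A) (wbar iv z) = R1 A" "dstar d2 (R2 A) (wbar iv z) = R2 A"
    using fz by (metis)+
  have ts0: "ts ! 0 = A" using loop by (simp add: nrun_def)
  show ?thesis
  proof (cases "x @ y = []")
    case True
    then have "x = []" by simp
    then have "C = A" using px by (simp add: npath_Nil)
    then show ?thesis using zl ts0 by (intro exI[of _ 0]) auto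
  next
    case False
    define J where "J = length (x @ y)"
    have J1: "1 \<le> J" using False by (simp add: J_def Suc_le_eq)
    have pxy: "NP A (x @ y) A" unfolding npath_append using px py by blast
    define W where "W = concat (replicate (length z) (x @ y))"
    have pW: "NP A W A" unfolding W_def by (rule npath_pow[OF pxy])
    obtain G w0 where fin: "nfinal iv k d1 q01 d2 q02 G" and pw0: "NP A w0 G" using trim A1(1) by blast
    have "NP A (W @ w0) G" unfolding npath_append using pW pw0 by blast
    from CL1[OF A1(1) lpz zl this fin] obtain m where m: "m \<ge> 1" "prefix (W @ w0) (concat (replicate m z))"
      by blast
    then have pre: "prefix W (concat (replicate m z))" by (metis prefix_order.trans prefixI)
    have lW: "length W = J * length z" by (simp add: W_def J_def)
    have "length W \<le> m * length z" using prefix_length_le[OF pre] by simp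
    then have Jm: "J \<le> m" using lW zl by (simp add: Suc_le_eq)
    have "W = take (length W) (concat (replicate m z))" using pre by (metis prefix_def append_eq_conv_conj)
    then have Wz: "W = concat (replicate J z)" using take_pow[OF Jm, of z] lW by simp
    obtain zz where zz: "length z = Suc zz" using zl by (cases "length z") auto
    define y' where "y' = y @ concat (replicate zz (x @ y))"
    have Wxy: "W = x @ y'" by (simp add: W_def y'_def zz)
    have xe: "x = take (length x) (concat (replicate J z))" using Wxy Wz by (metis append_eq_conv_conj)
    have ye: "y' = drop (length x) (concat (replicate J z))" using Wxy Wz by (metis append_eq_conv_conj)
    have lx: "length x \<le> J * length z" using Wxy lW by simp
    have py': "NP C y' A" unfolding y'_def npath_append using py npath_pow[OF pxy] by blast
    define r where "r = length x mod length z"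
    have rz: "r < length z" using zl unfolding r_def by (intro mod_less_divisor) (simp add: Suc_le_eq)
    note fx = path_facts[OF px]
    note fy = path_facts[OF py']
    have cP1: "P1 C = dstar d1 (P1 A) (take r z)"
      using fx take_mod_pow[OF z1(1) lx zl] xe by (simp add: r_def)
    have cP2: "P2 C = dstar d2 (P2 A) (take r z)"
      using fx take_mod_pow[OF z1(2) lx zl] xe by (simp add: r_def)
    have cR1: "R1 C = dstar d1 (R1 A) (wbar iv (drop r z))"
      using fy drop_mod_pow[OF z1(3) lx zl] ye by (simp add: r_def)
    have cR2: "R2 C = dstar d2 (R2 A) (wbar iv (drop r z))"
      using fy drop_mod_pow[OF z1(4) lx zl] ye by (simp add: r_def)
    have cL: "LV C = 0" using fy lvA by simp
    have sp: "NP A (take r z) (ts ! r) \<and> NP (ts ! r) (drop r z) A"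
      using nrun_split[OF loop] rz by simp
    note f1 = path_facts[OF sp[THEN conjunct1]]
    note f2 = path_facts[OF sp[THEN conjunct2]]
    have tsr: "P1 (ts ! r) = P1 C" "P2 (ts ! r) = P2 C" "R1 (ts ! r) = R1 C" "R2 (ts ! r) = R2 C" "LV (ts ! r) = LV C"
      using f1 f2 cP1 cP2 cR1 cR2 cL lvA by simp_all
    then have "ts ! r = C" by (simp add: prod_eq_iff)
    then show ?thesis using rz by blast
  qed
qed

end

theorem lemma6:
  fixes iv :: "'a::finite \<Rightarrow> 'a" and k :: nat
    and d1 :: "'q1::finite \<Rightarrow> 'a \<Rightarrow> 'q1" and q01 :: 'q1 and F1 :: "'q1 set"
    and d2 :: "'q2::finite \<Rightarrow> 'a \<Rightarrow> 'q2" and q02 :: 'q2 and F2 :: "'q2 set"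
    and K :: "(('q1 \<times> 'q2) \<times> 'q1 \<times> 'q2 \<times> nat) set"
    and A F :: "('q1 \<times> 'q2) \<times> 'q1 \<times> 'q2 \<times> nat"
    and vA w :: "'a list"
    and ss :: "(('q1 \<times> 'q2) \<times> 'q1 \<times> 'q2 \<times> nat) list"
  assumes inv: "\<forall>a. iv (iv a) = a"
    and k: "1 \<le> k"
    and reg: "regular (hairpin iv k (dlang d1 q01 F1) {u. wbar iv u \<in> dlang d2 q02 F2})"
    and trim: "\<forall>S. nstate iv k d1 q01 d2 q02 S \<longrightarrow>
                 (\<exists>I u. ninit iv k d1 q01 d2 q02 I \<and> npath iv k d1 q01 F1 d2 q02 F2 I u S) \<and>
                 (\<exists>G u. nfinal iv k d1 q01 d2 q02 G \<and> npath iv k d1 q01 F1 d2 q02 F2 S u G)"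
    and scc: "nontrivial_scc iv k d1 q01 F1 d2 q02 F2 K"
    and AK: "A \<in> K"
    and loop: "nrun iv k d1 q01 F1 d2 q02 F2 A vA ss A"
    and loopK: "set ss \<subseteq> K"
    and len: "1 \<le> length vA" "length vA \<le> card K"
    and path: "npath iv k d1 q01 F1 d2 q02 F2 A w F"
    and fin: "nfinal iv k d1 q01 d2 q02 F"
  shows "(\<exists>n\<ge>1. prefix w (concat (replicate n vA))) \<and>
         (\<forall>u. npath iv k d1 q01 F1 d2 q02 F2 A u A \<and> 1 \<le> length u \<and> length u \<le> card K
               \<longrightarrow> u = vA) \<and>
         (\<forall>B\<in>K. B \<noteq> A \<longrightarrow> (\<exists>!i. 0 < i \<and> i < length vA \<and> ss ! i = B)) \<and>
         length vA = card K"
proof -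
  let ?NP = "npath iv k d1 q01 F1 d2 q02 F2"
  have lpv: "?NP A vA A" using loop unfolding npath_def by blast
  have nstA: "nstate iv k d1 q01 d2 q02 A" using scc AK unfolding nontrivial_scc_def nscc_def by blast
  have cov: "\<And>C z ts. nrun iv k d1 q01 F1 d2 q02 F2 A z ts A \<Longrightarrow> 1 \<le> length z \<Longrightarrow> C \<in> K \<Longrightarrow>
      \<exists>r<length z. ts ! r = C"
    using main_cover[OF inv k reg trim] scc AK unfolding nontrivial_scc_def by blast
  have Kfin: "finite K" using len by (intro card_ge_0_finite) simp
  have cardle: "card K \<le> length z" if "nrun iv k d1 q01 F1 d2 q02 F2 A z ts A" "1 \<le> length z" for z ts
  proof -
    have "K \<subseteq> (\<lambda>r. ts ! r) ` {..<length z}" using cov[OF that] by blast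
    then have "card K \<le> card ((\<lambda>r. ts ! r) ` {..<length z})" by (intro card_mono) auto
    also have "\<dots> \<le> card {..<length z}" by (rule card_image_le) simp
    finally show ?thesis by simp
  qed
  have lenEq: "length vA = card K" using cardle[OF loop len(1)] len(2) by simp
  have c1: "\<exists>n\<ge>1. prefix w (concat (replicate n vA))"
    by (rule CL1[OF inv k reg trim nstA lpv len(1) path fin])
  have c2: "\<forall>u. ?NP A u A \<and> 1 \<le> length u \<and> length u \<le> card K \<longrightarrow> u = vA"
  proof (intro allI impI)
    fix u assume u: "?NP A u A \<and> 1 \<le> length u \<and> length u \<le> card K"
    then obtain ts where ts: "nrun iv k d1 q01 F1 d2 q02 F2 A u ts A" unfolding npath_def by blast
    have lu: "length u = length vA" using cardle[OF ts] u lenEq by simp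
    obtain G w0 where fG: "nfinal iv k d1 q01 d2 q02 G" and pw0: "?NP A w0 G" using trim nstA by blast
    have "?NP A (u @ w0) G" unfolding npath_append using u pw0 by blast
    from CL1[OF inv k reg trim nstA lpv len(1) this fG] obtain m where m: "m \<ge> 1"
      "prefix (u @ w0) (concat (replicate m vA))" by blast
    then have "prefix u (concat (replicate m vA))" by (metis prefix_order.trans prefixI)
    then have "u = take (length u) (concat (replicate m vA))" by (metis prefix_def append_eq_conv_conj)
    moreover obtain m' where "m = Suc m'" using m(1) by (cases m) auto
    ultimately show "u = vA" using lu by simp
  qed
  have ss0: "ss ! 0 = A" using loop by (simp add: nrun_def)
  have Ksub: "K \<subseteq> (\<lambda>r. ss ! r) ` {..<length vA}" using cov[OF loop len(1)] by blast
  have "card K \<le> card ((\<lambda>r. ss ! r) ` {..<length vA})" using Ksub by (intro card_mono) auto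
  moreover have "card ((\<lambda>r. ss ! r) ` {..<length vA}) \<le> card {..<length vA}" by (rule card_image_le) simp
  ultimately have "card ((\<lambda>r. ss ! r) ` {..<length vA}) = card {..<length vA}" using lenEq by simp
  then have inj: "inj_on (\<lambda>r. ss ! r) {..<length vA}" by (rule eq_card_imp_inj_on[rotated]) simp
  have c3: "\<forall>B\<in>K. B \<noteq> A \<longrightarrow> (\<exists>!i. 0 < i \<and> i < length vA \<and> ss ! i = B)"
  proof (intro ballI impI)
    fix B assume BK: "B \<in> K" and BA: "B \<noteq> A"
    obtain r where r: "r < length vA" "ss ! r = B" using cov[OF loop len(1) BK] by blast
    have r0: "0 < r" using r BA ss0 by (cases r) auto
    show "\<exists>!i. 0 < i \<and> i < length vA \<and> ss ! i = B"
    proof (rule ex1I[of _ r])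
      show "0 < r \<and> r < length vA \<and> ss ! r = B" using r r0 by simp
      fix j assume "0 < j \<and> j < length vA \<and> ss ! j = B"
      then show "j = r" using inj r unfolding inj_on_def by auto
    qed
  qed
  show ?thesis using c1 c2 c3 lenEq by blast
qed

end
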